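(* Let $k\ge 1$ be an integer, $T=6k+1$, and $w=s_1\cdots s_T\in\Omega_T$. For any distinct $i,j,t\in\{1,2,3\}$, $2x_{ij}(w)+x_{it}(w)+x_{tj}(w)\ge x_{ji}(w)+2k-1$. If equality holds, then $s_T=i$.
   Context: $\Omega_T$ is the set of words $s_1\cdots s_T$ over $\{1,2,3\}$ with $s_l\ne s_{l+1}$ for all $l$; for $i\ne j$, $x_{ij}(w)$ is the number of $l\in\{1,\dots,T-1\}$ with $s_ls_{l+1}=ij$. *)

theory Defs
  imports Main
begin

text \<open>Words s_1 ... s_T are lists of length T (0-indexed: s_l = w ! (l-1)).\<close>

definition Omega :: "nat \<Rightarrow> nat list set" where
  "Omega T = {w. length w = T \<and> set w \<subseteq> {1,2,3} \<and>
                 (\<forall>l. Suc l < T \<longrightarrow> w ! l \<noteq> w ! Suc l)}"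

definition xcount :: "nat \<Rightarrow> nat \<Rightarrow> nat list \<Rightarrow> nat" where
  "xcount i j w = card {l. Suc l < length w \<and> w ! l = i \<and> w ! Suc l = j}"

end

theory Submission
  imports Defs
begin

fun pc :: "nat \<Rightarrow> nat \<Rightarrow> nat list \<Rightarrow> nat" where
  "pc i j (x#y#r) = (if x = i \<and> y = j then 1 else 0) + pc i j (y#r)"
| "pc i j _ = 0"

lemma xcount_pc: "xcount i j w = pc i j w"
proof (induction i j w rule: pc.induct)
  case (1 i j x y r)
  have eq: "{l. Suc l < length (x#y#r) \<and> (x#y#r) ! l = i \<and> (x#y#r) ! Suc l = j}
      = (if x = i \<and> y = j then {0} else {}) \<union>
        Suc ` {m. Suc m < length (y#r) \<and> (y#r) ! m = i \<and> (y#r) ! Suc m = j}"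
    (is "?L = ?R")
  proof
    show "?L \<subseteq> ?R"
    proof
      fix l assume "l \<in> ?L"
      then show "l \<in> ?R" by (cases l) auto
    qed
  qed auto
  have "card ?R = (if x = i \<and> y = j then 1 else 0) +
        card {m. Suc m < length (y#r) \<and> (y#r) ! m = i \<and> (y#r) ! Suc m = j}"
    by (auto simp: card_image)
  then show ?case using 1 eq by (simp add: xcount_def)
qed (auto simp: xcount_def)

definition q :: "nat \<Rightarrow> nat \<Rightarrow> nat \<Rightarrow> int" where
  "q i t v = (if v = i then 0 else if v = t then 2 else 4)"

lemma ident:
  assumes "w \<noteq> []" "set w \<subseteq> {i,j,t}" "i \<noteq> j" "i \<noteq> t" "j \<noteq> t"
    "\<forall>l. Suc l < length w \<longrightarrow> w ! l \<noteq> w ! Suc l"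
  shows "3*(2*int(pc i j w) + int(pc i t w) + int(pc t j w) - int(pc j i w))
     = int (length w) - 1 + q i t (last w) - q i t (hd w) + int(pc i j w + pc j t w + pc t i w)"
  using assms
proof (induction i j w rule: pc.induct)
  case (1 i j x y r)
  have xy: "x \<noteq> y" using spec[OF "1.prems"(6), of 0] by simp
  have tl: "\<forall>l. Suc l < length (y#r) \<longrightarrow> (y#r) ! l \<noteq> (y#r) ! Suc l"
  proof (intro allI impI)
    fix l assume "Suc l < length (y#r)"
    then have "Suc (Suc l) < length (x#y#r)" by simp
    then have "(x#y#r) ! Suc l \<noteq> (x#y#r) ! Suc (Suc l)" using "1.prems"(6) by blast
    then show "(y#r) ! l \<noteq> (y#r) ! Suc l" by simp
  qed
  have IH: "3*(2*int(pc i j (y#r)) + int(pc i t (y#r)) + int(pc t j (y#r)) - int(pc j i (y#r)))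
     = int (length (y#r)) - 1 + q i t (last (y#r)) - q i t (hd (y#r)) + int(pc i j (y#r) + pc j t (y#r) + pc t i (y#r))"
    using "1.IH" "1.prems" tl by auto
  have "x \<in> {i,j,t}" "y \<in> {i,j,t}" using "1.prems" by auto
  then show ?case using IH xy "1.prems"(3-5)
    by (elim insertE; simp add: q_def; linarith)
qed auto

theorem lemma7:
  fixes k T :: nat and w :: "nat list" and i j t :: nat
  assumes "k \<ge> 1" and "T = 6 * k + 1" and "w \<in> Omega T"
    and "i \<in> {1,2,3}" and "j \<in> {1,2,3}" and "t \<in> {1,2,3}"
    and "i \<noteq> j" and "i \<noteq> t" and "j \<noteq> t"
  shows "int (2 * xcount i j w + xcount i t w + xcount t j w)
           \<ge> int (xcount j i w) + 2 * int k - 1 \<and>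
         (int (2 * xcount i j w + xcount i t w + xcount t j w)
           = int (xcount j i w) + 2 * int k - 1 \<longrightarrow> last w = i)"
proof -
  have len: "length w = 6*k+1" and sw: "set w \<subseteq> {1,2,3}"
    and adj: "\<forall>l. Suc l < length w \<longrightarrow> w ! l \<noteq> w ! Suc l"
    using assms(2,3) by (auto simp: Omega_def)
  have ijt: "{1,2,3} = {i,j,t}" using assms(4-9) by auto
  have ne: "w \<noteq> []" using len by auto
  note I = ident[OF ne sw[unfolded ijt] assms(7,8,9) adj]
  have qb: "0 \<le> q i t v" "q i t v \<le> 4" for v by (auto simp: q_def)
  have q0: "q i t v = 0 \<Longrightarrow> v = i" for v by (auto simp: q_def split: if_splits)
  have q4: "q i t v \<le> 1 \<Longrightarrow> v = i" for v by (auto simp: q_def split: if_splits)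
  define A where "A = 2*int(pc i j w) + int(pc i t w) + int(pc t j w) - int(pc j i w)"
  define S where "S = int(pc i j w + pc j t w + pc t i w)"
  have S0: "S \<ge> 0" unfolding S_def by simp
  have I2: "3*A = 6 * int k + q i t (last w) - q i t (hd w) + S"
    using I len unfolding A_def S_def by simp
  have c1: "A \<ge> 2 * int k - 1"
    using I2 S0 qb[of "last w"] qb[of "hd w"] by linarith
  have c2: "A = 2 * int k - 1 \<Longrightarrow> last w = i"
    using I2 S0 qb[of "last w"] qb[of "hd w"] q4[of "last w"] by linarith
  show ?thesis unfolding xcount_pc using c1 c2 unfolding A_def by simp
qed

end
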